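(* Two elements $a,b\in C\ell_{1,2}$, neither of which lies in the center $\mathbb{R}+\mathbb{R}e_7$ of $C\ell_{1,2}$, are similar if and only if $\mathrm{Cre}(a)=\mathrm{Cre}(b)$, $N(a)=N(b)$ and $T(a)=T(b)$.
   Context: $C\ell_{1,2}$ is the real Clifford algebra generated by $i_1,i_2,i_3$ with $i_1^2=1$, $i_2^2=i_3^2=-1$ and $i_ti_m=-i_mi_t$ for $t\neq m$, with real basis $e_0=1$, $e_1=i_1$, $e_2=i_2$, $e_3=i_1i_2$, $e_4=i_3$, $e_5=i_1i_3$, $e_6=i_2i_3$, $e_7=i_1i_2i_3$; its center is $\mathbb{R}+\mathbb{R}e_7$. For $a=\sum_{t=0}^7 a_te_t$ ($a_t\in\mathbb{R}$) define: $\mathrm{Cre}(a)=a_0+a_7e_7$; $N(a)=a_0^2-a_1^2+a_2^2-a_3^2+a_4^2-a_5^2+a_6^2-a_7^2$; $T(a)=a_0a_7+a_2a_5-a_1a_6-a_3a_4$; $P(a)=N(a)^2+4T(a)^2$. Let $Z(C\ell_{1,2})=\{a\in C\ell_{1,2}:P(a)=0\}$. Two elements $a,b\in C\ell_{1,2}$ are called similar if there exists $q\in C\ell_{1,2}\setminus Z(C\ell_{1,2})$ with $qa=bq$. *)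

theory Defs
  imports Complex_Main
begin

text \<open>An element is represented by its 8 real
coordinates a_0..a_7 w.r.t. the basis e_0..e_7 of the paper. The basis index k
is read as a bitmask: bit 0 = i1, bit 1 = i2, bit 2 = i3, so
e_1 = i1, e_2 = i2, e_3 = i1 i2, e_4 = i3, e_5 = i1 i3, e_6 = i2 i3, e_7 = i1 i2 i3,
exactly as in the paper.\<close>

typedef cl12 = "{f :: nat \<Rightarrow> real. \<forall>k\<ge>8. f k = 0}"
  by (rule exI[of _ "\<lambda>_. 0"]) simp

setup_lifting type_definition_cl12

lift_definition coord :: "cl12 \<Rightarrow> nat \<Rightarrow> real" is "\<lambda>f. f" .

definition bitm :: "nat \<Rightarrow> nat \<Rightarrow> bool" where
  "bitm k t = odd (k div 2 ^ t)"

text \<open>Sign in e_A e_B = sign A B * e_(A xor B), for increasing-order blades: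
(-1)^(number of transpositions) times the squares i1^2 = 1, i2^2 = i3^2 = -1.\<close>
definition blade_sign :: "nat \<Rightarrow> nat \<Rightarrow> real" where
  "blade_sign A B =
     (-1) ^ (card {(s,t). s < 3 \<and> t < 3 \<and> bitm A s \<and> bitm B t \<and> t < s}
             + card {t. t \<in> {1,2} \<and> bitm A t \<and> bitm B t})"

definition blade_xor :: "nat \<Rightarrow> nat \<Rightarrow> nat" where
  "blade_xor A B = (\<Sum>t<3. (if bitm A t \<noteq> bitm B t then 2 ^ t else 0))"

instantiation cl12 :: "{zero, one, plus, times, minus, uminus}"
begin
lift_definition zero_cl12 :: cl12 is "\<lambda>_. 0" by simp
lift_definition one_cl12 :: cl12 is "\<lambda>k. if k = 0 then 1 else 0" by simp
lift_definition plus_cl12 :: "cl12 \<Rightarrow> cl12 \<Rightarrow> cl12" is "\<lambda>f g k. f k + g k" by simp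
lift_definition minus_cl12 :: "cl12 \<Rightarrow> cl12 \<Rightarrow> cl12" is "\<lambda>f g k. f k - g k" by simp
lift_definition uminus_cl12 :: "cl12 \<Rightarrow> cl12" is "\<lambda>f k. - f k" by simp
lift_definition times_cl12 :: "cl12 \<Rightarrow> cl12 \<Rightarrow> cl12" is
  "\<lambda>f g k. if k < 8 then
     (\<Sum>i<8. \<Sum>j<8. if blade_xor i j = k then blade_sign i j * f i * g j else 0)
   else 0" by simp
instance ..
end

lift_definition Cre :: "cl12 \<Rightarrow> cl12" is "\<lambda>f m. if m = 0 \<or> m = 7 then f m else 0" by auto

definition Nrm :: "cl12 \<Rightarrow> real" where
  "Nrm a = (coord a 0)^2 - (coord a 1)^2 + (coord a 2)^2 - (coord a 3)^2
          + (coord a 4)^2 - (coord a 5)^2 + (coord a 6)^2 - (coord a 7)^2"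

definition Trc :: "cl12 \<Rightarrow> real" where
  "Trc a = coord a 0 * coord a 7 + coord a 2 * coord a 5
         - coord a 1 * coord a 6 - coord a 3 * coord a 4"

definition Pfun :: "cl12 \<Rightarrow> real" where
  "Pfun a = (Nrm a)^2 + 4 * (Trc a)^2"

definition Zset :: "cl12 set" where
  "Zset = {a. Pfun a = 0}"

definition center12 :: "cl12 set" where
  "center12 = {a. \<forall>k. k \<noteq> 0 \<and> k \<noteq> 7 \<longrightarrow> coord a k = 0}"

definition similar :: "cl12 \<Rightarrow> cl12 \<Rightarrow> bool" where
  "similar a b \<longleftrightarrow> (\<exists>q. q \<notin> Zset \<and> q * a = b * q)"

end

theory Submission imports Defs begin

lemma card_filter_sum: "finite A \<Longrightarrow> card {x\<in>A. Q x} = (\<Sum>x\<in>A. if Q x then 1 else (0::nat))"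
  using sum.inter_filter[of A "\<lambda>_. 1::nat" Q] by simp
lemma card_pairs: "card {(s,t). s < (3::nat) \<and> t < (3::nat) \<and> P s t} = (\<Sum>s<3. \<Sum>t<3. if P s t then 1 else 0)"
proof -
  have "{(s,t). s < (3::nat) \<and> t < (3::nat) \<and> P s t} = {x \<in> {..<3} \<times> {..<3}. P (fst x) (snd x)}" by auto
  then have "card {(s,t). s < (3::nat) \<and> t < (3::nat) \<and> P s t} = (\<Sum>x\<in>{..<3} \<times> {..<3}. if P (fst x) (snd x) then 1 else 0)"
    by (simp add: card_filter_sum)
  also have "\<dots> = (\<Sum>s<3. \<Sum>t<3. if P s t then 1 else 0)"
    by (simp add: sum.cartesian_product split_def)
  finally show ?thesis .
qed
lemma card_t: "card {t. t \<in> {1::nat,2} \<and> Q t} = (\<Sum>t\<in>{1::nat,2}. if Q t then 1 else 0)"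
  using card_filter_sum[of "{1::nat,2}" Q] by simp

lemma sum8: "(\<Sum>i<(8::nat). f i) = f 0 + f 1 + f 2 + f 3 + f 4 + f 5 + f 6 + (f 7 :: real)"
  by (simp add: lessThan_nat_numeral)

lemma coord_eq: "coord x k = Rep_cl12 x k" by (simp add: coord.rep_eq)
lemma coord_mult: "k < 8 \<Longrightarrow> coord (a*b) k = (\<Sum>i<8. \<Sum>j<8. if blade_xor i j = k then blade_sign i j * coord a i * coord b j else 0)"
  by (simp only: coord_eq times_cl12.rep_eq) simp

lemma sum3: "(\<Sum>i<(3::nat). f i) = f 0 + f 1 + (f 2 :: nat)"
  by (simp add: lessThan_nat_numeral)

lemma bm_0_0[simp]: "bitm 0 0 = False" by (simp add: bitm_def)
lemma bm_0_1[simp]: "bitm 0 1 = False" by (simp add: bitm_def)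
lemma bm_0_2[simp]: "bitm 0 2 = False" by (simp add: bitm_def)
lemma bm_0_S[simp]: "bitm 0 (Suc 0) = False" by (simp add: bitm_def)
lemma bm_1_0[simp]: "bitm 1 0 = True" by (simp add: bitm_def)
lemma bm_1_1[simp]: "bitm 1 1 = False" by (simp add: bitm_def)
lemma bm_1_2[simp]: "bitm 1 2 = False" by (simp add: bitm_def)
lemma bm_1_S[simp]: "bitm 1 (Suc 0) = False" by (simp add: bitm_def)
lemma bm_2_0[simp]: "bitm 2 0 = False" by (simp add: bitm_def)
lemma bm_2_1[simp]: "bitm 2 1 = True" by (simp add: bitm_def)
lemma bm_2_2[simp]: "bitm 2 2 = False" by (simp add: bitm_def)
lemma bm_2_S[simp]: "bitm 2 (Suc 0) = True" by (simp add: bitm_def)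
lemma bm_3_0[simp]: "bitm 3 0 = True" by (simp add: bitm_def)
lemma bm_3_1[simp]: "bitm 3 1 = True" by (simp add: bitm_def)
lemma bm_3_2[simp]: "bitm 3 2 = False" by (simp add: bitm_def)
lemma bm_3_S[simp]: "bitm 3 (Suc 0) = True" by (simp add: bitm_def)
lemma bm_4_0[simp]: "bitm 4 0 = False" by (simp add: bitm_def)
lemma bm_4_1[simp]: "bitm 4 1 = False" by (simp add: bitm_def)
lemma bm_4_2[simp]: "bitm 4 2 = True" by (simp add: bitm_def)
lemma bm_4_S[simp]: "bitm 4 (Suc 0) = False" by (simp add: bitm_def)
lemma bm_5_0[simp]: "bitm 5 0 = True" by (simp add: bitm_def)
lemma bm_5_1[simp]: "bitm 5 1 = False" by (simp add: bitm_def)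
lemma bm_5_2[simp]: "bitm 5 2 = True" by (simp add: bitm_def)
lemma bm_5_S[simp]: "bitm 5 (Suc 0) = False" by (simp add: bitm_def)
lemma bm_6_0[simp]: "bitm 6 0 = False" by (simp add: bitm_def)
lemma bm_6_1[simp]: "bitm 6 1 = True" by (simp add: bitm_def)
lemma bm_6_2[simp]: "bitm 6 2 = True" by (simp add: bitm_def)
lemma bm_6_S[simp]: "bitm 6 (Suc 0) = True" by (simp add: bitm_def)
lemma bm_7_0[simp]: "bitm 7 0 = True" by (simp add: bitm_def)
lemma bm_7_1[simp]: "bitm 7 1 = True" by (simp add: bitm_def)
lemma bm_7_2[simp]: "bitm 7 2 = True" by (simp add: bitm_def)
lemma bm_7_S[simp]: "bitm 7 (Suc 0) = True" by (simp add: bitm_def)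
lemma bm_S_0[simp]: "bitm (Suc 0) 0 = True" by (simp add: bitm_def)
lemma bm_S_S[simp]: "bitm (Suc 0) (Suc 0) = False" by (simp add: bitm_def)
lemma bm_S_2[simp]: "bitm (Suc 0) 2 = False" by (simp add: bitm_def)
lemma bs_0_0[simp]: "blade_sign 0 0 = 1"
  unfolding blade_sign_def card_pairs card_t sum3 by simp
lemma bx_0_0[simp]: "blade_xor 0 0 = 0"
  unfolding blade_xor_def sum3 by simp
lemma bs_0_1[simp]: "blade_sign 0 1 = 1"
  unfolding blade_sign_def card_pairs card_t sum3 by simp
lemma bx_0_1[simp]: "blade_xor 0 1 = 1"
  unfolding blade_xor_def sum3 by simp
lemma bs_0_2[simp]: "blade_sign 0 2 = 1"
  unfolding blade_sign_def card_pairs card_t sum3 by simp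
lemma bx_0_2[simp]: "blade_xor 0 2 = 2"
  unfolding blade_xor_def sum3 by simp
lemma bs_0_3[simp]: "blade_sign 0 3 = 1"
  unfolding blade_sign_def card_pairs card_t sum3 by simp
lemma bx_0_3[simp]: "blade_xor 0 3 = 3"
  unfolding blade_xor_def sum3 by simp
lemma bs_0_4[simp]: "blade_sign 0 4 = 1"
  unfolding blade_sign_def card_pairs card_t sum3 by simp
lemma bx_0_4[simp]: "blade_xor 0 4 = 4"
  unfolding blade_xor_def sum3 by simp
lemma bs_0_5[simp]: "blade_sign 0 5 = 1"
  unfolding blade_sign_def card_pairs card_t sum3 by simp
lemma bx_0_5[simp]: "blade_xor 0 5 = 5"
  unfolding blade_xor_def sum3 by simp
lemma bs_0_6[simp]: "blade_sign 0 6 = 1"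
  unfolding blade_sign_def card_pairs card_t sum3 by simp
lemma bx_0_6[simp]: "blade_xor 0 6 = 6"
  unfolding blade_xor_def sum3 by simp
lemma bs_0_7[simp]: "blade_sign 0 7 = 1"
  unfolding blade_sign_def card_pairs card_t sum3 by simp
lemma bx_0_7[simp]: "blade_xor 0 7 = 7"
  unfolding blade_xor_def sum3 by simp
lemma bs_1_0[simp]: "blade_sign 1 0 = 1"
  unfolding blade_sign_def card_pairs card_t sum3 by simp
lemma bx_1_0[simp]: "blade_xor 1 0 = 1"
  unfolding blade_xor_def sum3 by simp
lemma bs_1_1[simp]: "blade_sign 1 1 = 1"
  unfolding blade_sign_def card_pairs card_t sum3 by simp
lemma bx_1_1[simp]: "blade_xor 1 1 = 0"
  unfolding blade_xor_def sum3 by simp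
lemma bs_1_2[simp]: "blade_sign 1 2 = 1"
  unfolding blade_sign_def card_pairs card_t sum3 by simp
lemma bx_1_2[simp]: "blade_xor 1 2 = 3"
  unfolding blade_xor_def sum3 by simp
lemma bs_1_3[simp]: "blade_sign 1 3 = 1"
  unfolding blade_sign_def card_pairs card_t sum3 by simp
lemma bx_1_3[simp]: "blade_xor 1 3 = 2"
  unfolding blade_xor_def sum3 by simp
lemma bs_1_4[simp]: "blade_sign 1 4 = 1"
  unfolding blade_sign_def card_pairs card_t sum3 by simp
lemma bx_1_4[simp]: "blade_xor 1 4 = 5"
  unfolding blade_xor_def sum3 by simp
lemma bs_1_5[simp]: "blade_sign 1 5 = 1"
  unfolding blade_sign_def card_pairs card_t sum3 by simp
lemma bx_1_5[simp]: "blade_xor 1 5 = 4"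
  unfolding blade_xor_def sum3 by simp
lemma bs_1_6[simp]: "blade_sign 1 6 = 1"
  unfolding blade_sign_def card_pairs card_t sum3 by simp
lemma bx_1_6[simp]: "blade_xor 1 6 = 7"
  unfolding blade_xor_def sum3 by simp
lemma bs_1_7[simp]: "blade_sign 1 7 = 1"
  unfolding blade_sign_def card_pairs card_t sum3 by simp
lemma bx_1_7[simp]: "blade_xor 1 7 = 6"
  unfolding blade_xor_def sum3 by simp
lemma bs_2_0[simp]: "blade_sign 2 0 = 1"
  unfolding blade_sign_def card_pairs card_t sum3 by simp
lemma bx_2_0[simp]: "blade_xor 2 0 = 2"
  unfolding blade_xor_def sum3 by simp
lemma bs_2_1[simp]: "blade_sign 2 1 = -1"
  unfolding blade_sign_def card_pairs card_t sum3 by simp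
lemma bx_2_1[simp]: "blade_xor 2 1 = 3"
  unfolding blade_xor_def sum3 by simp
lemma bs_2_2[simp]: "blade_sign 2 2 = -1"
  unfolding blade_sign_def card_pairs card_t sum3 by simp
lemma bx_2_2[simp]: "blade_xor 2 2 = 0"
  unfolding blade_xor_def sum3 by simp
lemma bs_2_3[simp]: "blade_sign 2 3 = 1"
  unfolding blade_sign_def card_pairs card_t sum3 by simp
lemma bx_2_3[simp]: "blade_xor 2 3 = 1"
  unfolding blade_xor_def sum3 by simp
lemma bs_2_4[simp]: "blade_sign 2 4 = 1"
  unfolding blade_sign_def card_pairs card_t sum3 by simp
lemma bx_2_4[simp]: "blade_xor 2 4 = 6"
  unfolding blade_xor_def sum3 by simp
lemma bs_2_5[simp]: "blade_sign 2 5 = -1"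
  unfolding blade_sign_def card_pairs card_t sum3 by simp
lemma bx_2_5[simp]: "blade_xor 2 5 = 7"
  unfolding blade_xor_def sum3 by simp
lemma bs_2_6[simp]: "blade_sign 2 6 = -1"
  unfolding blade_sign_def card_pairs card_t sum3 by simp
lemma bx_2_6[simp]: "blade_xor 2 6 = 4"
  unfolding blade_xor_def sum3 by simp
lemma bs_2_7[simp]: "blade_sign 2 7 = 1"
  unfolding blade_sign_def card_pairs card_t sum3 by simp
lemma bx_2_7[simp]: "blade_xor 2 7 = 5"
  unfolding blade_xor_def sum3 by simp
lemma bs_3_0[simp]: "blade_sign 3 0 = 1"
  unfolding blade_sign_def card_pairs card_t sum3 by simp
lemma bx_3_0[simp]: "blade_xor 3 0 = 3"
  unfolding blade_xor_def sum3 by simp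
lemma bs_3_1[simp]: "blade_sign 3 1 = -1"
  unfolding blade_sign_def card_pairs card_t sum3 by simp
lemma bx_3_1[simp]: "blade_xor 3 1 = 2"
  unfolding blade_xor_def sum3 by simp
lemma bs_3_2[simp]: "blade_sign 3 2 = -1"
  unfolding blade_sign_def card_pairs card_t sum3 by simp
lemma bx_3_2[simp]: "blade_xor 3 2 = 1"
  unfolding blade_xor_def sum3 by simp
lemma bs_3_3[simp]: "blade_sign 3 3 = 1"
  unfolding blade_sign_def card_pairs card_t sum3 by simp
lemma bx_3_3[simp]: "blade_xor 3 3 = 0"
  unfolding blade_xor_def sum3 by simp
lemma bs_3_4[simp]: "blade_sign 3 4 = 1"
  unfolding blade_sign_def card_pairs card_t sum3 by simp
lemma bx_3_4[simp]: "blade_xor 3 4 = 7"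
  unfolding blade_xor_def sum3 by simp
lemma bs_3_5[simp]: "blade_sign 3 5 = -1"
  unfolding blade_sign_def card_pairs card_t sum3 by simp
lemma bx_3_5[simp]: "blade_xor 3 5 = 6"
  unfolding blade_xor_def sum3 by simp
lemma bs_3_6[simp]: "blade_sign 3 6 = -1"
  unfolding blade_sign_def card_pairs card_t sum3 by simp
lemma bx_3_6[simp]: "blade_xor 3 6 = 5"
  unfolding blade_xor_def sum3 by simp
lemma bs_3_7[simp]: "blade_sign 3 7 = 1"
  unfolding blade_sign_def card_pairs card_t sum3 by simp
lemma bx_3_7[simp]: "blade_xor 3 7 = 4"
  unfolding blade_xor_def sum3 by simp
lemma bs_4_0[simp]: "blade_sign 4 0 = 1"
  unfolding blade_sign_def card_pairs card_t sum3 by simp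
lemma bx_4_0[simp]: "blade_xor 4 0 = 4"
  unfolding blade_xor_def sum3 by simp
lemma bs_4_1[simp]: "blade_sign 4 1 = -1"
  unfolding blade_sign_def card_pairs card_t sum3 by simp
lemma bx_4_1[simp]: "blade_xor 4 1 = 5"
  unfolding blade_xor_def sum3 by simp
lemma bs_4_2[simp]: "blade_sign 4 2 = -1"
  unfolding blade_sign_def card_pairs card_t sum3 by simp
lemma bx_4_2[simp]: "blade_xor 4 2 = 6"
  unfolding blade_xor_def sum3 by simp
lemma bs_4_3[simp]: "blade_sign 4 3 = 1"
  unfolding blade_sign_def card_pairs card_t sum3 by simp
lemma bx_4_3[simp]: "blade_xor 4 3 = 7"
  unfolding blade_xor_def sum3 by simp
lemma bs_4_4[simp]: "blade_sign 4 4 = -1"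
  unfolding blade_sign_def card_pairs card_t sum3 by simp
lemma bx_4_4[simp]: "blade_xor 4 4 = 0"
  unfolding blade_xor_def sum3 by simp
lemma bs_4_5[simp]: "blade_sign 4 5 = 1"
  unfolding blade_sign_def card_pairs card_t sum3 by simp
lemma bx_4_5[simp]: "blade_xor 4 5 = 1"
  unfolding blade_xor_def sum3 by simp
lemma bs_4_6[simp]: "blade_sign 4 6 = 1"
  unfolding blade_sign_def card_pairs card_t sum3 by simp
lemma bx_4_6[simp]: "blade_xor 4 6 = 2"
  unfolding blade_xor_def sum3 by simp
lemma bs_4_7[simp]: "blade_sign 4 7 = -1"
  unfolding blade_sign_def card_pairs card_t sum3 by simp
lemma bx_4_7[simp]: "blade_xor 4 7 = 3"
  unfolding blade_xor_def sum3 by simp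
lemma bs_5_0[simp]: "blade_sign 5 0 = 1"
  unfolding blade_sign_def card_pairs card_t sum3 by simp
lemma bx_5_0[simp]: "blade_xor 5 0 = 5"
  unfolding blade_xor_def sum3 by simp
lemma bs_5_1[simp]: "blade_sign 5 1 = -1"
  unfolding blade_sign_def card_pairs card_t sum3 by simp
lemma bx_5_1[simp]: "blade_xor 5 1 = 4"
  unfolding blade_xor_def sum3 by simp
lemma bs_5_2[simp]: "blade_sign 5 2 = -1"
  unfolding blade_sign_def card_pairs card_t sum3 by simp
lemma bx_5_2[simp]: "blade_xor 5 2 = 7"
  unfolding blade_xor_def sum3 by simp
lemma bs_5_3[simp]: "blade_sign 5 3 = 1"
  unfolding blade_sign_def card_pairs card_t sum3 by simp
lemma bx_5_3[simp]: "blade_xor 5 3 = 6"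
  unfolding blade_xor_def sum3 by simp
lemma bs_5_4[simp]: "blade_sign 5 4 = -1"
  unfolding blade_sign_def card_pairs card_t sum3 by simp
lemma bx_5_4[simp]: "blade_xor 5 4 = 1"
  unfolding blade_xor_def sum3 by simp
lemma bs_5_5[simp]: "blade_sign 5 5 = 1"
  unfolding blade_sign_def card_pairs card_t sum3 by simp
lemma bx_5_5[simp]: "blade_xor 5 5 = 0"
  unfolding blade_xor_def sum3 by simp
lemma bs_5_6[simp]: "blade_sign 5 6 = 1"
  unfolding blade_sign_def card_pairs card_t sum3 by simp
lemma bx_5_6[simp]: "blade_xor 5 6 = 3"
  unfolding blade_xor_def sum3 by simp
lemma bs_5_7[simp]: "blade_sign 5 7 = -1"
  unfolding blade_sign_def card_pairs card_t sum3 by simp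
lemma bx_5_7[simp]: "blade_xor 5 7 = 2"
  unfolding blade_xor_def sum3 by simp
lemma bs_6_0[simp]: "blade_sign 6 0 = 1"
  unfolding blade_sign_def card_pairs card_t sum3 by simp
lemma bx_6_0[simp]: "blade_xor 6 0 = 6"
  unfolding blade_xor_def sum3 by simp
lemma bs_6_1[simp]: "blade_sign 6 1 = 1"
  unfolding blade_sign_def card_pairs card_t sum3 by simp
lemma bx_6_1[simp]: "blade_xor 6 1 = 7"
  unfolding blade_xor_def sum3 by simp
lemma bs_6_2[simp]: "blade_sign 6 2 = 1"
  unfolding blade_sign_def card_pairs card_t sum3 by simp
lemma bx_6_2[simp]: "blade_xor 6 2 = 4"
  unfolding blade_xor_def sum3 by simp
lemma bs_6_3[simp]: "blade_sign 6 3 = 1"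
  unfolding blade_sign_def card_pairs card_t sum3 by simp
lemma bx_6_3[simp]: "blade_xor 6 3 = 5"
  unfolding blade_xor_def sum3 by simp
lemma bs_6_4[simp]: "blade_sign 6 4 = -1"
  unfolding blade_sign_def card_pairs card_t sum3 by simp
lemma bx_6_4[simp]: "blade_xor 6 4 = 2"
  unfolding blade_xor_def sum3 by simp
lemma bs_6_5[simp]: "blade_sign 6 5 = -1"
  unfolding blade_sign_def card_pairs card_t sum3 by simp
lemma bx_6_5[simp]: "blade_xor 6 5 = 3"
  unfolding blade_xor_def sum3 by simp
lemma bs_6_6[simp]: "blade_sign 6 6 = -1"
  unfolding blade_sign_def card_pairs card_t sum3 by simp
lemma bx_6_6[simp]: "blade_xor 6 6 = 0"
  unfolding blade_xor_def sum3 by simp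
lemma bs_6_7[simp]: "blade_sign 6 7 = -1"
  unfolding blade_sign_def card_pairs card_t sum3 by simp
lemma bx_6_7[simp]: "blade_xor 6 7 = 1"
  unfolding blade_xor_def sum3 by simp
lemma bs_7_0[simp]: "blade_sign 7 0 = 1"
  unfolding blade_sign_def card_pairs card_t sum3 by simp
lemma bx_7_0[simp]: "blade_xor 7 0 = 7"
  unfolding blade_xor_def sum3 by simp
lemma bs_7_1[simp]: "blade_sign 7 1 = 1"
  unfolding blade_sign_def card_pairs card_t sum3 by simp
lemma bx_7_1[simp]: "blade_xor 7 1 = 6"
  unfolding blade_xor_def sum3 by simp
lemma bs_7_2[simp]: "blade_sign 7 2 = 1"
  unfolding blade_sign_def card_pairs card_t sum3 by simp
lemma bx_7_2[simp]: "blade_xor 7 2 = 5"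
  unfolding blade_xor_def sum3 by simp
lemma bs_7_3[simp]: "blade_sign 7 3 = 1"
  unfolding blade_sign_def card_pairs card_t sum3 by simp
lemma bx_7_3[simp]: "blade_xor 7 3 = 4"
  unfolding blade_xor_def sum3 by simp
lemma bs_7_4[simp]: "blade_sign 7 4 = -1"
  unfolding blade_sign_def card_pairs card_t sum3 by simp
lemma bx_7_4[simp]: "blade_xor 7 4 = 3"
  unfolding blade_xor_def sum3 by simp
lemma bs_7_5[simp]: "blade_sign 7 5 = -1"
  unfolding blade_sign_def card_pairs card_t sum3 by simp
lemma bx_7_5[simp]: "blade_xor 7 5 = 2"
  unfolding blade_xor_def sum3 by simp
lemma bs_7_6[simp]: "blade_sign 7 6 = -1"
  unfolding blade_sign_def card_pairs card_t sum3 by simp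
lemma bx_7_6[simp]: "blade_xor 7 6 = 1"
  unfolding blade_xor_def sum3 by simp
lemma bs_7_7[simp]: "blade_sign 7 7 = -1"
  unfolding blade_sign_def card_pairs card_t sum3 by simp
lemma bx_7_7[simp]: "blade_xor 7 7 = 0"
  unfolding blade_xor_def sum3 by simp

lemmas bs_simps = bs_0_0 bs_0_1 bs_0_2 bs_0_3 bs_0_4 bs_0_5 bs_0_6 bs_0_7 bs_1_0 bs_1_1 bs_1_2 bs_1_3 bs_1_4 bs_1_5 bs_1_6 bs_1_7 bs_2_0 bs_2_1 bs_2_2 bs_2_3 bs_2_4 bs_2_5 bs_2_6 bs_2_7 bs_3_0 bs_3_1 bs_3_2 bs_3_3 bs_3_4 bs_3_5 bs_3_6 bs_3_7 bs_4_0 bs_4_1 bs_4_2 bs_4_3 bs_4_4 bs_4_5 bs_4_6 bs_4_7 bs_5_0 bs_5_1 bs_5_2 bs_5_3 bs_5_4 bs_5_5 bs_5_6 bs_5_7 bs_6_0 bs_6_1 bs_6_2 bs_6_3 bs_6_4 bs_6_5 bs_6_6 bs_6_7 bs_7_0 bs_7_1 bs_7_2 bs_7_3 bs_7_4 bs_7_5 bs_7_6 bs_7_7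
lemmas bx_simps = bx_0_0 bx_0_1 bx_0_2 bx_0_3 bx_0_4 bx_0_5 bx_0_6 bx_0_7 bx_1_0 bx_1_1 bx_1_2 bx_1_3 bx_1_4 bx_1_5 bx_1_6 bx_1_7 bx_2_0 bx_2_1 bx_2_2 bx_2_3 bx_2_4 bx_2_5 bx_2_6 bx_2_7 bx_3_0 bx_3_1 bx_3_2 bx_3_3 bx_3_4 bx_3_5 bx_3_6 bx_3_7 bx_4_0 bx_4_1 bx_4_2 bx_4_3 bx_4_4 bx_4_5 bx_4_6 bx_4_7 bx_5_0 bx_5_1 bx_5_2 bx_5_3 bx_5_4 bx_5_5 bx_5_6 bx_5_7 bx_6_0 bx_6_1 bx_6_2 bx_6_3 bx_6_4 bx_6_5 bx_6_6 bx_6_7 bx_7_0 bx_7_1 bx_7_2 bx_7_3 bx_7_4 bx_7_5 bx_7_6 bx_7_7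
lemma cm0: "coord (a*b) 0 = coord a 0 * coord b 0 + coord a 1 * coord b 1 - coord a 2 * coord b 2 + coord a 3 * coord b 3 - coord a 4 * coord b 4 + coord a 5 * coord b 5 - coord a 6 * coord b 6 - coord a 7 * coord b 7"
  apply (subst coord_mult, simp)
  apply (simp only: sum8)
  apply (simp only: bs_simps bx_simps)
  by simp

lemma cm1: "coord (a*b) 1 = coord a 0 * coord b 1 + coord a 1 * coord b 0 + coord a 2 * coord b 3 - coord a 3 * coord b 2 + coord a 4 * coord b 5 - coord a 5 * coord b 4 - coord a 6 * coord b 7 - coord a 7 * coord b 6"
  apply (subst coord_mult, simp)
  apply (simp only: sum8)
  apply (simp only: bs_simps bx_simps)
  by simp

lemma cm2: "coord (a*b) 2 = coord a 0 * coord b 2 + coord a 1 * coord b 3 + coord a 2 * coord b 0 - coord a 3 * coord b 1 + coord a 4 * coord b 6 - coord a 5 * coord b 7 - coord a 6 * coord b 4 - coord a 7 * coord b 5"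
  apply (subst coord_mult, simp)
  apply (simp only: sum8)
  apply (simp only: bs_simps bx_simps)
  by simp

lemma cm3: "coord (a*b) 3 = coord a 0 * coord b 3 + coord a 1 * coord b 2 - coord a 2 * coord b 1 + coord a 3 * coord b 0 - coord a 4 * coord b 7 + coord a 5 * coord b 6 - coord a 6 * coord b 5 - coord a 7 * coord b 4"
  apply (subst coord_mult, simp)
  apply (simp only: sum8)
  apply (simp only: bs_simps bx_simps)
  by simp

lemma cm4: "coord (a*b) 4 = coord a 0 * coord b 4 + coord a 1 * coord b 5 - coord a 2 * coord b 6 + coord a 3 * coord b 7 + coord a 4 * coord b 0 - coord a 5 * coord b 1 + coord a 6 * coord b 2 + coord a 7 * coord b 3"
  apply (subst coord_mult, simp)
  apply (simp only: sum8)
  apply (simp only: bs_simps bx_simps)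
  by simp

lemma cm5: "coord (a*b) 5 = coord a 0 * coord b 5 + coord a 1 * coord b 4 + coord a 2 * coord b 7 - coord a 3 * coord b 6 - coord a 4 * coord b 1 + coord a 5 * coord b 0 + coord a 6 * coord b 3 + coord a 7 * coord b 2"
  apply (subst coord_mult, simp)
  apply (simp only: sum8)
  apply (simp only: bs_simps bx_simps)
  by simp

lemma cm6: "coord (a*b) 6 = coord a 0 * coord b 6 + coord a 1 * coord b 7 + coord a 2 * coord b 4 - coord a 3 * coord b 5 - coord a 4 * coord b 2 + coord a 5 * coord b 3 + coord a 6 * coord b 0 + coord a 7 * coord b 1"
  apply (subst coord_mult, simp)
  apply (simp only: sum8)
  apply (simp only: bs_simps bx_simps)
  by simp

lemma cm7: "coord (a*b) 7 = coord a 0 * coord b 7 + coord a 1 * coord b 6 - coord a 2 * coord b 5 + coord a 3 * coord b 4 + coord a 4 * coord b 3 - coord a 5 * coord b 2 + coord a 6 * coord b 1 + coord a 7 * coord b 0"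
  apply (subst coord_mult, simp)
  apply (simp only: sum8)
  apply (simp only: bs_simps bx_simps)
  by simp


datatype m2 = M2 complex complex complex complex

fun mm :: "m2 \<Rightarrow> m2 \<Rightarrow> m2" where
  "mm (M2 a b c d) (M2 e f g h) = M2 (a*e+b*g) (a*f+b*h) (c*e+d*g) (c*f+d*h)"

fun dt :: "m2 \<Rightarrow> complex" where "dt (M2 a b c d) = a*d - b*c"
fun tr :: "m2 \<Rightarrow> complex" where "tr (M2 a b c d) = a + d"
fun adj :: "m2 \<Rightarrow> m2" where "adj (M2 a b c d) = M2 d (-b) (-c) a"
fun scal :: "m2 \<Rightarrow> bool" where "scal (M2 a b c d) = (b = 0 \<and> c = 0 \<and> a = d)"
definition Id2 :: m2 where "Id2 = M2 1 0 0 1"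
definition minv :: "m2 \<Rightarrow> m2" where
  "minv S = (case S of M2 a b c d \<Rightarrow> M2 (d * inverse (dt S)) (- b * inverse (dt S)) (- c * inverse (dt S)) (a * inverse (dt S)))"

lemma mm_assoc: "mm (mm X Y) Z = mm X (mm Y Z)"
  by (cases X; cases Y; cases Z) (simp add: algebra_simps)
lemma mm_Id1: "mm Id2 X = X" by (cases X) (simp add: Id2_def)
lemma mm_Id2: "mm X Id2 = X" by (cases X) (simp add: Id2_def)
lemma mm_inv1: assumes "dt S \<noteq> 0" shows "mm S (minv S) = Id2"
proof (cases S)
  case (M2 a b c d)
  define k where "k = inverse (a*d - b*c)"
  have h: "(a*d - b*c) * k = 1" using assms M2 by (simp add: k_def)
  show ?thesis using M2 h unfolding minv_def Id2_def by (simp only: m2.case dt.simps mm.simps k_def[symmetric] m2.inject) (simp add: algebra_simps)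
qed
lemma mm_inv2: assumes "dt S \<noteq> 0" shows "mm (minv S) S = Id2"
proof (cases S)
  case (M2 a b c d)
  define k where "k = inverse (a*d - b*c)"
  have h: "(a*d - b*c) * k = 1" using assms M2 by (simp add: k_def)
  show ?thesis using M2 h unfolding minv_def Id2_def by (simp only: m2.case dt.simps mm.simps k_def[symmetric] m2.inject) (simp add: algebra_simps)
qed
lemma tr_comm: "tr (mm X Y) = tr (mm Y X)"
  by (cases X; cases Y) (simp add: algebra_simps)
lemma dt_mm: "dt (mm X Y) = dt X * dt Y"
  by (cases X; cases Y) (simp add: algebra_simps)
lemma dt_inv: "dt S \<noteq> 0 \<Longrightarrow> dt (minv S) \<noteq> 0"
  using dt_mm[of S "minv S"] mm_inv1[of S] by (auto simp: Id2_def)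

definition comp :: "complex \<Rightarrow> complex \<Rightarrow> m2" where "comp t d = M2 0 (-d) 1 t"

lemma to_comp: assumes "\<not> scal A"
  shows "\<exists>S. dt S \<noteq> 0 \<and> mm A S = mm S (comp (tr A) (dt A))"
proof (cases A)
  case (M2 p q r s)
  show ?thesis
  proof (cases "r = 0")
    case False
    show ?thesis using False M2
      by (intro exI[of _ "M2 1 p 0 r"]) (simp add: comp_def algebra_simps)
  next
    case r: True
    show ?thesis
    proof (cases "q = 0")
      case False
      show ?thesis using False M2
        by (intro exI[of _ "M2 0 q 1 s"]) (simp add: comp_def algebra_simps)
    next
      case True
      with r M2 assms have "p \<noteq> s" by auto
      then show ?thesis using True r M2
        by (intro exI[of _ "M2 1 p 1 s"]) (simp add: comp_def algebra_simps)
    qed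
  qed
qed

lemma sim_back:
  assumes "\<not> scal A" "\<not> scal B" "tr A = tr B" "dt A = dt B"
  shows "\<exists>Q. dt Q \<noteq> 0 \<and> mm Q A = mm B Q"
proof -
  obtain S where S: "dt S \<noteq> 0" "mm A S = mm S (comp (tr A) (dt A))" using to_comp assms(1) by blast
  obtain R where R: "dt R \<noteq> 0" "mm B R = mm R (comp (tr A) (dt A))" using to_comp[OF assms(2)] assms(3,4) by auto
  define C where "C = comp (tr A) (dt A)"
  have A: "A = mm S (mm C (minv S))"
  proof -
    have "A = mm (mm A S) (minv S)" using S(1) by (simp add: mm_assoc mm_inv1 mm_Id2)
    then show ?thesis using S(2) by (simp add: mm_assoc C_def)
  qed
  have "mm (mm R (minv S)) A = mm R (mm (mm (minv S) S) (mm C (minv S)))"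
    by (subst A) (simp add: mm_assoc)
  also have "\<dots> = mm (mm R C) (minv S)" using S(1) by (simp add: mm_inv2 mm_Id1 mm_assoc)
  also have "\<dots> = mm B (mm R (minv S))" using R(2) by (simp add: C_def mm_assoc[symmetric])
  finally have "mm (mm R (minv S)) A = mm B (mm R (minv S))" .
  moreover have "dt (mm R (minv S)) \<noteq> 0" using R(1) S(1) dt_inv by (simp add: dt_mm)
  ultimately show ?thesis by blast
qed

lemma sim_fwd:
  assumes "dt Q \<noteq> 0" "mm Q A = mm B Q"
  shows "tr A = tr B \<and> dt A = dt B"
proof
  have "dt Q * dt A = dt B * dt Q" using assms(2) dt_mm by metis
  then show "dt A = dt B" using assms(1) by simp
next
  have A: "A = mm (minv Q) (mm B Q)"
    using assms by (metis mm_assoc mm_Id1 mm_inv2)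
  have "tr (mm (minv Q) (mm B Q)) = tr (mm B (mm Q (minv Q)))" by (simp only: tr_comm[of "minv Q"] mm_assoc)
  also have "\<dots> = tr B" using assms(1) by (simp add: mm_inv1 mm_Id2)
  finally have "tr (mm (minv Q) (mm B Q)) = tr B" .
  then show "tr A = tr B" using A by simp
qed

definition phi :: "cl12 \<Rightarrow> m2" where
  "phi x = M2 (Complex (coord x 0 - coord x 5) (coord x 2 + coord x 7))
              (Complex (coord x 1 + coord x 4) (coord x 6 - coord x 3))
              (Complex (coord x 1 - coord x 4) (coord x 3 + coord x 6))
              (Complex (coord x 0 + coord x 5) (coord x 7 - coord x 2))"

lemma phi_mult: "phi (x*y) = mm (phi x) (phi y)"
  unfolding phi_def cm0 cm1 cm2 cm3 cm4 cm5 cm6 cm7 by (simp add: complex_eq_iff algebra_simps)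

lemma coord_ge8: "k \<ge> 8 \<Longrightarrow> coord x k = 0"
  using Rep_cl12[of x] by (simp add: coord_eq)

lemma less8: "(k::nat) < 8 \<Longrightarrow> k = 0 \<or> k = 1 \<or> k = 2 \<or> k = 3 \<or> k = 4 \<or> k = 5 \<or> k = 6 \<or> k = 7"
  by auto

lemma coord_ext: assumes "\<And>k. k < 8 \<Longrightarrow> coord x k = coord y k" shows "x = y"
proof -
  have "Rep_cl12 x = Rep_cl12 y"
  proof
    fix k show "Rep_cl12 x k = Rep_cl12 y k"
      using assms[of k] coord_ge8[of k x] coord_ge8[of k y] by (cases "k < 8") (auto simp: coord_eq)
  qed
  then show ?thesis by (simp add: Rep_cl12_inject)
qed

lemma phi_inj: assumes "phi x = phi y" shows "x = y"
proof (rule coord_ext)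
  fix k :: nat assume k: "k < 8"
  from assms have e: "coord x 0 - coord x 5 = coord y 0 - coord y 5" "coord x 2 + coord x 7 = coord y 2 + coord y 7"
    "coord x 1 + coord x 4 = coord y 1 + coord y 4" "coord x 6 - coord x 3 = coord y 6 - coord y 3"
    "coord x 1 - coord x 4 = coord y 1 - coord y 4" "coord x 3 + coord x 6 = coord y 3 + coord y 6"
    "coord x 0 + coord x 5 = coord y 0 + coord y 5" "coord x 7 - coord x 2 = coord y 7 - coord y 2"
    by (simp_all add: phi_def complex_eq_iff)
  show "coord x k = coord y k" using less8[OF k] e by (elim disjE; simp; linarith)
qed

lift_definition mk :: "(nat \<Rightarrow> real) \<Rightarrow> cl12" is "\<lambda>f k. if k < 8 then f k else 0" by simp

lemma coord_mk: "k < 8 \<Longrightarrow> coord (mk f) k = f k"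
  by (simp add: coord_eq mk.rep_eq)

lemma phi_surj: "\<exists>x. phi x = M"
proof (cases M)
  case (M2 p q r s)
  let ?l = "[(Re p + Re s)/2, (Re q + Re r)/2, (Im p - Im s)/2, (Im r - Im q)/2,
             (Re q - Re r)/2, (Re s - Re p)/2, (Im q + Im r)/2, (Im p + Im s)/2]"
  have "phi (mk (\<lambda>k. ?l ! k)) = M"
    by (simp add: M2 phi_def coord_mk complex_eq_iff field_simps)
  then show ?thesis by blast
qed

lemma dt_phi: "dt (phi x) = Complex (Nrm x) (2 * Trc x)"
  by (simp add: phi_def Nrm_def Trc_def complex_eq_iff algebra_simps power2_eq_square)

lemma tr_phi: "tr (phi x) = Complex (2 * coord x 0) (2 * coord x 7)"
  by (simp add: phi_def complex_eq_iff)

lemma Pfun_dt: "Pfun x = 0 \<longleftrightarrow> dt (phi x) = 0"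
proof -
  have "(Nrm x)^2 \<ge> 0" "(Trc x)^2 \<ge> 0" by simp_all
  then have "Pfun x = 0 \<longleftrightarrow> (Nrm x)^2 = 0 \<and> (Trc x)^2 = 0" unfolding Pfun_def by linarith
  then show ?thesis by (simp add: dt_phi complex_eq_iff)
qed

lemma Cre_eq: "Cre x = Cre y \<longleftrightarrow> coord x 0 = coord y 0 \<and> coord x 7 = coord y 7"
proof
  assume h: "Cre x = Cre y"
  have "coord (Cre x) 0 = coord (Cre y) 0" "coord (Cre x) 7 = coord (Cre y) 7" using h by simp_all
  then show "coord x 0 = coord y 0 \<and> coord x 7 = coord y 7" by (simp add: coord_eq Cre.rep_eq)
next
  assume h: "coord x 0 = coord y 0 \<and> coord x 7 = coord y 7"
  have "Rep_cl12 (Cre x) = Rep_cl12 (Cre y)"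
    using h by (auto simp: Cre.rep_eq coord_eq)
  then show "Cre x = Cre y" by (simp add: Rep_cl12_inject)
qed

lemma center_scal: "x \<in> center12 \<longleftrightarrow> scal (phi x)"
proof
  assume "x \<in> center12"
  then have "coord x k = 0" if "k \<noteq> 0" "k \<noteq> 7" for k using that by (simp add: center12_def)
  then show "scal (phi x)" by (simp add: phi_def complex_eq_iff)
next
  assume "scal (phi x)"
  then have e: "coord x 1 + coord x 4 = 0" "coord x 6 - coord x 3 = 0"
    "coord x 1 - coord x 4 = 0" "coord x 3 + coord x 6 = 0"
    "coord x 0 - coord x 5 = coord x 0 + coord x 5" "coord x 2 + coord x 7 = coord x 7 - coord x 2"
    by (simp_all add: phi_def complex_eq_iff)
  show "x \<in> center12" unfolding center12_def
  proof (intro CollectI allI impI)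
    fix k :: nat assume k: "k \<noteq> 0 \<and> k \<noteq> 7"
    show "coord x k = 0"
    proof (cases "k < 8")
      case True
      show ?thesis using less8[OF True] k e by (elim disjE; simp; linarith)
    qed (simp add: coord_ge8)
  qed
qed

theorem theorem5p1:
  fixes a b :: cl12
  assumes "a \<notin> center12" and "b \<notin> center12"
  shows "similar a b \<longleftrightarrow> (Cre a = Cre b \<and> Nrm a = Nrm b \<and> Trc a = Trc b)"
proof
  assume "similar a b"
  then obtain q where q: "Pfun q \<noteq> 0" "q * a = b * q" unfolding similar_def Zset_def by blast
  have "dt (phi q) \<noteq> 0" using q(1) Pfun_dt by blast
  moreover have "mm (phi q) (phi a) = mm (phi b) (phi q)" using q(2) by (metis phi_mult)
  ultimately have "tr (phi a) = tr (phi b) \<and> dt (phi a) = dt (phi b)" by (rule sim_fwd)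
  then show "Cre a = Cre b \<and> Nrm a = Nrm b \<and> Trc a = Trc b"
    by (simp add: tr_phi dt_phi Cre_eq)
next
  assume h: "Cre a = Cre b \<and> Nrm a = Nrm b \<and> Trc a = Trc b"
  have "tr (phi a) = tr (phi b)" "dt (phi a) = dt (phi b)" using h by (simp_all add: tr_phi dt_phi Cre_eq)
  moreover have "\<not> scal (phi a)" "\<not> scal (phi b)" using assms center_scal by blast+
  ultimately obtain Q where Q: "dt Q \<noteq> 0" "mm Q (phi a) = mm (phi b) Q" using sim_back by blast
  obtain q where qQ: "phi q = Q" using phi_surj by blast
  have "Pfun q \<noteq> 0" using Q(1) qQ Pfun_dt by blast
  moreover have "q * a = b * q" using Q(2) qQ by (intro phi_inj) (simp add: phi_mult)
  ultimately show "similar a b" unfolding similar_def Zset_def by blast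
qed

end
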